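(* Algorithm Drift (defined in the context) is $3$-competitive for the line chasing problem in $\mathbb{R}^2$: for every initial point $P_0\in\mathbb{R}^2$ and every finite sequence of lines $X_1,\dots,X_m$ in $\mathbb{R}^2$, the path $P_0,P_1,\dots,P_m$ produced by Drift satisfies $\sum_{t=1}^m |P_{t-1}P_t| \le 3\cdot \mathrm{OPT}$, where $\mathrm{OPT}=\min\{\sum_{t=1}^m |A_{t-1}A_t| : A_0=P_0,\ A_t\in X_t \text{ for } t=1,\dots,m\}$.
   Context: $|XY|$ denotes Euclidean distance. Line chasing problem: given an initial point $P_0\in\mathbb{R}^d$ and lines $X_1,\dots,X_m$ revealed one at a time, an online algorithm must, upon seeing $X_t$ (and not the later lines), choose $P_t\in X_t$; its cost is $\sum_{t=1}^m|P_{t-1}P_t|$. An online algorithm is $c$-competitive if its cost is at most $c$ times the optimal offline cost $\mathrm{OPT}$ on every input. Algorithm Drift (in $\mathbb{R}^2$): Let $L$ be the previous request line and $P\in L$ the algorithm's current point (for the first request, $L$ is an arbitrary fixed line through $P_0$). Let $L'$ be the new request, and for $X\in L$ let $\bar X$ denote the orthogonal projection of $X$ onto $L'$. If $L'$ does not intersect $L$ in a single point (i.e. $L'$ is parallel to or equal to $L$), move to $P'=\bar P$. Otherwise let $S=L\cap L'$, $r=|SP|$, $h=|P\bar P|$, $s=|S\bar P|$, and $x=\frac{1}{\sqrt2}(h+s-r)$; move to the point $P'\in L'$ lying on the ray from $S$ through $\bar P$ (or $P'=S$ if $\bar P=S$) with $|SP'|=s-x$. *)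

theory Defs
  imports "HOL-Analysis.Analysis"
begin

type_synonym point = "real^2"

definition is_line :: "point set \<Rightarrow> bool" where
  "is_line L \<longleftrightarrow> (\<exists>a v. v \<noteq> 0 \<and> L = {a + t *\<^sub>R v | t. True})"

definition proj :: "point set \<Rightarrow> point \<Rightarrow> point" where
  "proj L X = (THE Y. Y \<in> L \<and> (\<forall>Z\<in>L. inner (X - Y) (Z - Y) = 0))"

definition drift_step :: "point set \<Rightarrow> point set \<Rightarrow> point \<Rightarrow> point" where
  "drift_step L L' P =
     (if \<not> (\<exists>S. L \<inter> L' = {S}) then proj L' P
      else (let S = (THE S. L \<inter> L' = {S});
                Pb = proj L' P;
                r = dist S P; h = dist P Pb; s = dist S Pb;
                x = (h + s - r) / sqrt 2
            in if Pb = S then S else S + ((s - x) / s) *\<^sub>R (Pb - S)))"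

text \<open>Position of Drift after serving requests X 1, ..., X t, starting at P0 with
  initial (arbitrary fixed) line L0 through P0.\<close>
fun drift_pos :: "point set \<Rightarrow> point \<Rightarrow> (nat \<Rightarrow> point set) \<Rightarrow> nat \<Rightarrow> point" where
  "drift_pos L0 P0 X 0 = P0"
| "drift_pos L0 P0 X (Suc t) =
     drift_step (if t = 0 then L0 else X t) (X (Suc t)) (drift_pos L0 P0 X t)"

definition path_cost :: "(nat \<Rightarrow> point) \<Rightarrow> nat \<Rightarrow> real" where
  "path_cost A m = (\<Sum>t = 1..m. dist (A (t - 1)) (A t))"

definition OPT :: "point \<Rightarrow> (nat \<Rightarrow> point set) \<Rightarrow> nat \<Rightarrow> real" where
  "OPT P0 X m = Inf {path_cost A m | A. A 0 = P0 \<and> (\<forall>t\<in>{1..m}. A t \<in> X t)}"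

end

theory Submission
  imports Defs
begin

lemma cert:
  fixes g e A P A' P' :: "'a::real_inner"
  assumes "A - P = l *\<^sub>R e" "norm e = 1" "\<bar>inner g e\<bar> \<le> 1" "norm g \<le> sqrt 3"
    "inner g (A' - P') \<ge> dist A' P'" "sqrt 3 * inner g (P' - P) \<ge> dist P P'"
  shows "dist P P' + sqrt 3 * dist P' A' \<le> sqrt 3 * dist P A + 3 * dist A A'"
proof -
  have "inner g (A - P) = l * inner g e" using assms(1) by simp
  also have "\<dots> \<le> \<bar>l\<bar>"
  proof -
    have "\<bar>l * inner g e\<bar> \<le> \<bar>l\<bar>" using assms(3) by (simp add: abs_mult mult_left_le)
    thus ?thesis by linarith
  qed
  also have "\<bar>l\<bar> = dist P A" using assms(1,2) by (simp add: dist_norm norm_minus_commute)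
  finally have 1: "inner g (A - P) \<le> dist P A" .
  have "inner g (A' - A) \<le> norm g * norm (A' - A)" by (rule norm_cauchy_schwarz)
  also have "\<dots> \<le> sqrt 3 * dist A A'" 
    by (simp add: assms(4) dist_norm mult_right_mono norm_minus_commute)
  finally have 2: "inner g (A' - A) \<le> sqrt 3 * dist A A'" .
  have 3: "inner g (A' - P) = inner g (A' - P') + inner g (P' - P)"
    by (simp add: inner_diff_right)
  have 4: "inner g (A - P) + inner g (A' - A) = inner g (A' - P)"
    by (simp add: inner_diff_right)
  have "sqrt 3 * (inner g (A - P) + inner g (A' - A)) \<le> sqrt 3 * dist P A + sqrt 3 * (sqrt 3 * dist A A')"
    unfolding distrib_left using 1 2 by (intro add_mono mult_left_mono) auto
  also have "sqrt 3 * (sqrt 3 * dist A A') = 3 * dist A A'" by (simp add: mult.assoc[symmetric])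
  finally have 5: "sqrt 3 * inner g (A' - P) \<le> sqrt 3 * dist P A + 3 * dist A A'" using 4 by simp
  have 6: "sqrt 3 * dist P' A' \<le> sqrt 3 * inner g (A' - P')"
    by (rule mult_left_mono) (use assms(5) in \<open>simp_all add: dist_commute\<close>)
  have 7: "sqrt 3 * inner g (A' - P) = sqrt 3 * inner g (A' - P') + sqrt 3 * inner g (P' - P)"
    using 3 by (simp add: distrib_left)
  show ?thesis using 5 6 7 assms(6) by linarith
qed

lemma cert2:
  fixes e u S :: "'a::real_inner"
  assumes ne: "norm e = 1" and nu: "norm u = 1" and c: "inner e u = c"
    and "\<bar>\<alpha> + \<beta> * c\<bar> \<le> 1" "\<alpha>^2 + 2*\<alpha>*\<beta>*c + \<beta>^2 \<le> 3"
    "(b - p) * (\<alpha> * c + \<beta>) \<ge> \<bar>b - p\<bar>"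
    "p * (\<alpha> * c + \<beta>) - r * (\<alpha> + \<beta> * c) \<ge> 0"
    "3 * (p * (\<alpha> * c + \<beta>) - r * (\<alpha> + \<beta> * c))^2 \<ge> p^2 - 2*r*c*p + r^2"
  shows "dist (S + r *\<^sub>R e) (S + p *\<^sub>R u) + sqrt 3 * dist (S + p *\<^sub>R u) (S + b *\<^sub>R u)
     \<le> sqrt 3 * dist (S + r *\<^sub>R e) (S + a *\<^sub>R e) + 3 * dist (S + a *\<^sub>R e) (S + b *\<^sub>R u)"
proof -
  define g where "g = \<alpha> *\<^sub>R e + \<beta> *\<^sub>R u"
  have ee: "inner e e = 1" using ne by (simp add: power2_norm_eq_inner[symmetric])
  have uu: "inner u u = 1" using nu by (simp add: power2_norm_eq_inner[symmetric])
  have ue: "inner u e = c" using c by (simp add: inner_commute)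
  have ge: "inner g e = \<alpha> + \<beta> * c" unfolding g_def
    by (simp add: inner_add_left ee ue)
  have gu: "inner g u = \<alpha> * c + \<beta>" unfolding g_def
    by (simp add: inner_add_left uu c)
  have gg: "inner g g = \<alpha>^2 + 2*\<alpha>*\<beta>*c + \<beta>^2" unfolding g_def
    by (simp add: inner_add_left inner_add_right ee uu c ue power2_eq_square algebra_simps)
  have ng: "norm g \<le> sqrt 3" using gg assms(5) by (simp add: norm_eq_sqrt_inner)
  have d1: "(S + a *\<^sub>R e) - (S + r *\<^sub>R e) = (a - r) *\<^sub>R e" by (simp add: algebra_simps)
  have d2: "(S + b *\<^sub>R u) - (S + p *\<^sub>R u) = (b - p) *\<^sub>R u" by (simp add: algebra_simps)
  have d3: "(S + p *\<^sub>R u) - (S + r *\<^sub>R e) = p *\<^sub>R u - r *\<^sub>R e" by (simp add: algebra_simps)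
  have i2: "inner g ((S + b *\<^sub>R u) - (S + p *\<^sub>R u)) \<ge> dist (S + b *\<^sub>R u) (S + p *\<^sub>R u)"
    unfolding d2 dist_norm using nu gu assms(6) by simp
  have i3: "inner g ((S + p *\<^sub>R u) - (S + r *\<^sub>R e)) = p * (\<alpha> * c + \<beta>) - r * (\<alpha> + \<beta> * c)"
    unfolding d3 by (simp add: inner_diff_right gu ge)
  have nn: "inner (r *\<^sub>R e - p *\<^sub>R u) (r *\<^sub>R e - p *\<^sub>R u) = p^2 - 2*r*c*p + r^2"
  proof -
    have "inner (r *\<^sub>R e - p *\<^sub>R u) (r *\<^sub>R e - p *\<^sub>R u) = r*r*inner e e - 2*r*p*inner e u + p*p*inner u u"
      by (simp add: inner_diff_left inner_diff_right inner_commute[of u e] algebra_simps)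
    thus ?thesis using ee uu c by (simp add: power2_eq_square algebra_simps)
  qed
  have "dist (S + r *\<^sub>R e) (S + p *\<^sub>R u) = sqrt (p^2 - 2*r*c*p + r^2)"
  proof -
    have dP: "(S + r *\<^sub>R e) - (S + p *\<^sub>R u) = r *\<^sub>R e - p *\<^sub>R u" by simp
    show ?thesis by (simp only: dist_norm dP norm_eq_sqrt_inner nn)
  qed
  also have "\<dots> \<le> sqrt (3 * (p * (\<alpha> * c + \<beta>) - r * (\<alpha> + \<beta> * c))^2)"
    using assms(8) by (rule real_sqrt_le_mono)
  also have "\<dots> = sqrt 3 * (p * (\<alpha> * c + \<beta>) - r * (\<alpha> + \<beta> * c))"
    using assms(7) by (simp add: real_sqrt_mult)
  finally have i4: "sqrt 3 * inner g ((S + p *\<^sub>R u) - (S + r *\<^sub>R e)) \<ge> dist (S + r *\<^sub>R e) (S + p *\<^sub>R u)"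
    using i3 by simp
  show ?thesis
    by (rule cert[OF d1 ne _ ng i2 i4]) (use ge assms(4) in simp)
qed

lemma nonpar_main:
  fixes e u S :: "'a::real_inner"
  assumes ne: "norm e = 1" and nu: "norm u = 1" and c: "inner e u = c"
    and c0: "0 \<le> c" and c1: "c < 1" and r0: "0 \<le> r"
    and z: "z = sqrt (1 - c^2)" and x: "x = r * (z + c - 1) / sqrt 2" and p: "p = r * c - x"
  shows "dist (S + r *\<^sub>R e) (S + p *\<^sub>R u) + sqrt 3 * dist (S + p *\<^sub>R u) (S + b *\<^sub>R u)
     \<le> sqrt 3 * dist (S + r *\<^sub>R e) (S + a *\<^sub>R e) + 3 * dist (S + a *\<^sub>R e) (S + b *\<^sub>R u)"
proof -
  define q where "q = sqrt (2::real)"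
  have qq: "q * q = 2" unfolding q_def by simp
  have q0: "q > 0" unfolding q_def by simp
  have q43: "3 * q \<ge> 4"
  proof -
    have "(4/3::real) \<le> q" unfolding q_def by (rule real_le_rsqrt) (simp add: power2_eq_square)
    thus ?thesis by simp
  qed
  have q1: "q \<ge> 1" using q43 by simp
  have z2: "z * z = 1 - c * c" unfolding z using c0 c1
    by (simp add: power2_eq_square[symmetric] abs_square_le_1)
  have cc: "c^2 < 1"
  proof -
    have "c*c \<le> c" using c0 c1 by (simp add: mult_left_le_one_le)
    thus ?thesis using c1 by (simp add: power2_eq_square)
  qed
  have z0: "z > 0" unfolding z using cc by simp
  have z1: "z \<le> 1" unfolding z using c0 by (simp add: real_sqrt_le_1_iff)
  have zc: "z + c \<ge> 1"
  proof -
    have "c * z \<ge> 0" using c0 z0 by simp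
    hence "(z + c) * (z + c) \<ge> 1 * 1" using z2 by (simp add: algebra_simps)
    thus ?thesis using z0 c0 by (metis abs_of_nonneg add_nonneg_nonneg less_imp_le abs_le_square_iff
          power2_eq_square abs_one)
  qed
  have qx: "q * x = r * (z + c - 1)" unfolding x q_def by simp
  have x0: "x \<ge> 0" unfolding x using r0 zc by simp
  have D: "p^2 - 2*r*c*p + r^2 = r^2 * (z * z) + x^2" unfolding p using z2
    by algebra
  show ?thesis
  proof (cases "b \<ge> p")
    case True
    show ?thesis
    proof (cases "c - q * z \<ge> -1")
      case True
      define \<alpha> where "\<alpha> = - q / z"
      define \<beta> where "\<beta> = 1 + q * c / z"
      have e1: "\<alpha> + \<beta> * c = c - q * z" unfolding \<alpha>_def \<beta>_def using z0
        apply (simp add: field_simps) using z2 by algebra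
      have e2: "\<alpha>^2 + 2*\<alpha>*\<beta>*c + \<beta>^2 = 3" unfolding \<alpha>_def \<beta>_def using z0
        apply (simp add: field_simps power2_eq_square) using z2 qq by algebra
      have e3: "\<alpha> * c + \<beta> = 1" unfolding \<alpha>_def \<beta>_def using z0 by (simp add: field_simps)
      have G: "p * (\<alpha> * c + \<beta>) - r * (\<alpha> + \<beta> * c) = r * q * z - x"
        unfolding e1 e3 p by (simp add: algebra_simps)
      have xh: "x \<le> r * z * q / 2"
      proof -
        have h1: "q * (r * z * q / 2) = r * z"
        proof -
          have "q * (r * z * q / 2) = (q * q) * (r * z) / 2" by (simp add: algebra_simps)
          thus ?thesis using qq by simp
        qed
        have h3: "r*(c-1) \<le> 0" using r0 c1 by (simp add: mult_nonneg_nonpos)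
        have h4: "r*(z+c-1) = r* z + r*(c-1)" by (simp add: algebra_simps)
        have "q * x \<le> q * (r * z * q / 2)" using qx h1 h3 h4 by linarith
        thus ?thesis using q0 by simp
      qed
      have kk: "r * z * q / 2 \<ge> 0" using q0 z0 r0 by simp
      have kk2: "r * q * z = 2 * (r * z * q / 2)" by (simp add: algebra_simps)
      have G0: "r * q * z - x \<ge> 0" using xh kk kk2 by linarith
      have key: "2 * (3 * (r * q * z - x)^2 - (r^2 * (z * z) + x^2))
          = (2 * x - r * z * q) * (2 * x - 5 * (r * z * q))"
      proof -
        have "(r * q * z - x)^2 = (q*q) * (r * z)^2 - 2*q*r*z*x + x^2" by (simp add: power2_eq_square algebra_simps)
        moreover have "(2 * x - r * z * q) * (2 * x - 5 * (r * z * q)) = 4*x^2 - 12*q*r*z*x + 5*(q*q)*(r * z)^2"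
          by (simp add: power2_eq_square algebra_simps)
        ultimately show ?thesis using qq by (simp add: power2_eq_square algebra_simps)
      qed
      have "(2 * x - r * z * q) * (2 * x - 5 * (r * z * q)) \<ge> 0"
      proof -
        have a1: "2 * x - r * z * q \<le> 0" using xh by simp
        have "2 * x - 5 * (r * z * q) \<le> 0" using a1 kk by linarith
        thus ?thesis using a1 by (simp add: mult_nonpos_nonpos)
      qed
      hence "0 \<le> 2 * (3 * (r * q * z - x)^2 - (r^2 * (z * z) + x^2))" using key by simp
      hence G2: "3 * (r * q * z - x)^2 \<ge> r^2 * (z * z) + x^2" by simp
      show ?thesis
        apply (rule cert2[OF ne nu c, of \<alpha> \<beta>])
        using e1 e2 e3 G G0 G2 D \<open>b \<ge> p\<close> True c1 mult_pos_pos[OF q0 z0] by auto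
    next
      case False
      define \<alpha> where "\<alpha> = - 1 - q * c / z"
      define \<beta> where "\<beta> = q / z"
      have e1: "\<alpha> + \<beta> * c = -1" unfolding \<alpha>_def \<beta>_def using z0 by (simp add: field_simps)
      have e2: "\<alpha>^2 + 2*\<alpha>*\<beta>*c + \<beta>^2 = 3" unfolding \<alpha>_def \<beta>_def using z0
        apply (simp add: field_simps power2_eq_square) using z2 qq by algebra
      have e3: "\<alpha> * c + \<beta> = q * z - c" unfolding \<alpha>_def \<beta>_def using z0
        apply (simp add: field_simps) using z2 by algebra
      have e3': "q * z - c > 1" using False by simp
      have xc: "x \<le> r * c"
      proof -
        have "z + c - 1 \<le> q * c" using z1 q1 c0
          by (smt (verit) mult_right_mono mult_cancel_right1)
        hence "r * (z + c - 1) \<le> r * (q * c)" using r0 by (rule mult_left_mono)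
        moreover have "r * (q * c) = q * (r * c)" by simp
        ultimately have "q * x \<le> q * (r * c)" using qx by simp
        thus ?thesis using q0 by simp
      qed
      have p0: "p \<ge> 0" using xc p by simp
      have G: "p * (\<alpha> * c + \<beta>) - r * (\<alpha> + \<beta> * c) = p * (q * z - c) + r"
        unfolding e1 e3 by simp
      have Gr: "p * (q * z - c) + r \<ge> r" using p0 e3' by simp
      have "x^2 \<le> (r*c)^2" using xc x0 by (simp add: power_mono)
      moreover have "r^2 * (z * z) + (r*c)^2 = r^2" using z2 by algebra
      ultimately have "r^2 * (z * z) + x^2 \<le> r^2" by linarith
      also have "r^2 \<le> (p * (q * z - c) + r)^2" using Gr r0 by (simp add: power_mono)
      also have "\<dots> \<le> 3 * (p * (q * z - c) + r)^2" by simp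
      finally have G2: "r^2 * (z * z) + x^2 \<le> 3 * (p * (q * z - c) + r)^2" .
      have bp: "(b - p) * (q * z - c) \<ge> \<bar>b - p\<bar>" using \<open>b \<ge> p\<close> e3'
        by (simp add: mult_le_cancel_left1)
      show ?thesis
        apply (rule cert2[OF ne nu c, of \<alpha> \<beta>])
        using e1 e2 e3 G G2 D bp Gr r0 by auto
    qed
  next
    case False
    define \<alpha> where "\<alpha> = - 1 / (1 + c)"
    have e1: "\<alpha> + \<alpha> * c = -1" unfolding \<alpha>_def using c0 by (simp add: field_simps)
    have h1: "(1 + c) * \<alpha> = -1" unfolding \<alpha>_def using c0 by simp
    have "\<alpha>^2 + 2*\<alpha>*\<alpha>*c + \<alpha>^2 = 2*\<alpha>*((1 + c) * \<alpha>)" by (simp add: power2_eq_square algebra_simps)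
    hence e2: "\<alpha>^2 + 2*\<alpha>*\<alpha>*c + \<alpha>^2 = - 2 * \<alpha>" using h1 by simp
    have e2': "- 2 * \<alpha> \<le> 3" unfolding \<alpha>_def using c0 by (simp add: field_simps)
    have e3: "\<alpha> * c + \<alpha> = -1" using e1 by (simp add: algebra_simps)
    have G: "p * (\<alpha> * c + \<alpha>) - r * (\<alpha> + \<alpha> * c) = r * (1 - c) + x"
      unfolding e1 e3 p by (simp add: algebra_simps)
    have G0: "r * (1 - c) + x \<ge> 0" using r0 c1 x0 by simp
    have ze: "z \<ge> 1 - c"
    proof -
      have "(1 - c) * (1 - c) \<le> z * z" unfolding z2 using c0 c1 mult_left_le_one_le[of c c] by (simp add: algebra_simps)
      thus ?thesis using z0 by (metis abs_of_pos abs_le_square_iff power2_eq_square abs_le_D1)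
    qed
    have key: "3 * (r * (1 - c) + x)^2 - (r^2 * (z * z) + x^2)
        = r^2 * (1 - c) * ((3*q - 2) * z - (3*q - 4) * (1 - c))"
    proof -
      have x2: "2 * x^2 = (q * x)^2"
      proof -
        have "(q * x)^2 = (q * q) * x^2" by (simp add: power2_eq_square)
        thus ?thesis using qq by simp
      qed
      have x6: "6 * x = 3 * q * (q * x)"
      proof -
        have "3 * q * (q * x) = 3 * (q * q) * x" by simp
        thus ?thesis using qq by simp
      qed
      have "3 * (r * (1 - c) + x)^2 - (r^2 * (z * z) + x^2)
          = 3 * (r * (1 - c))^2 + r * (1 - c) * (6 * x) + 2 * x^2 - r^2 * (z * z)"
        by (simp add: power2_eq_square algebra_simps)
      also have "\<dots> = 3 * (r * (1 - c))^2 + r * (1 - c) * (3 * q * (r * (z + c - 1))) + (r * (z + c - 1))^2 - r^2 * (z * z)"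
        unfolding x6 x2 qx by simp
      also have "\<dots> = r^2 * (1 - c) * ((3*q - 2) * z - (3*q - 4) * (1 - c))"
        by (simp add: power2_eq_square algebra_simps)
      finally show ?thesis .
    qed
    have "(3*q - 2) * z - (3*q - 4) * (1 - c) \<ge> 0"
    proof -
      have "(3*q - 4) * (1 - c) \<le> (3*q - 4) * z" using q43 ze by (simp add: mult_left_mono)
      also have "\<dots> \<le> (3*q - 2) * z" using z0 by (simp add: mult_right_mono)
      finally show ?thesis by simp
    qed
    hence "r^2 * (1 - c) * ((3*q - 2) * z - (3*q - 4) * (1 - c)) \<ge> 0" using c1 by simp
    hence "0 \<le> 3 * (r * (1 - c) + x)^2 - (r^2 * (z * z) + x^2)" using key by simp
    hence G2: "3 * (r * (1 - c) + x)^2 \<ge> r^2 * (z * z) + x^2" by simp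
    have bp: "(b - p) * (\<alpha> * c + \<alpha>) \<ge> \<bar>b - p\<bar>" using False e3 by simp
    show ?thesis
      apply (rule cert2[OF ne nu c, of \<alpha> \<alpha>])
      using e1 e2 e2' e3 G G0 G2 D bp by auto
  qed
qed

lemma line_unit:
  assumes "is_line L"
  shows "\<exists>a e. norm e = 1 \<and> L = {a + t *\<^sub>R e | t. True}"
proof -
  obtain a v where v: "v \<noteq> 0" and L: "L = {a + t *\<^sub>R v | t. True}"
    using assms unfolding is_line_def by blast
  define e where "e = v /\<^sub>R norm v"
  have ne: "norm e = 1" unfolding e_def using v by simp
  have "L = {a + t *\<^sub>R e | t. True}"
  proof (rule set_eqI, rule iffI)
    fix X assume "X \<in> L"
    then obtain t where "X = a + t *\<^sub>R v" using L by blast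
    hence "X = a + (t * norm v) *\<^sub>R e" unfolding e_def using v by simp
    thus "X \<in> {a + t *\<^sub>R e | t. True}" by blast
  next
    fix X assume "X \<in> {a + t *\<^sub>R e | t. True}"
    then obtain t where "X = a + t *\<^sub>R e" by blast
    hence "X = a + (t / norm v) *\<^sub>R v" unfolding e_def by (simp add: divide_inverse)
    thus "X \<in> L" using L by blast
  qed
  thus ?thesis using ne by blast
qed

lemma line_rebase:
  fixes S a e :: point
  assumes "L = {a + t *\<^sub>R e | t. True}" "S \<in> L"
  shows "L = {S + t *\<^sub>R e | t. True}"
proof -
  obtain t0 where S: "S = a + t0 *\<^sub>R e" using assms by blast
  show ?thesis
  proof (rule set_eqI, rule iffI)
    fix X assume "X \<in> L"
    then obtain t where "X = a + t *\<^sub>R e" using assms by blast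
    hence "X = S + (t - t0) *\<^sub>R e" unfolding S by (simp add: scaleR_left_diff_distrib)
    thus "X \<in> {S + t *\<^sub>R e | t. True}" by blast
  next
    fix X assume "X \<in> {S + t *\<^sub>R e | t. True}"
    then obtain t where "X = S + t *\<^sub>R e" by blast
    hence "X = a + (t0 + t) *\<^sub>R e" unfolding S by (simp add: scaleR_add_left)
    thus "X \<in> L" using assms by blast
  qed
qed

lemma line_neg:
  fixes S e :: point
  shows "{S + t *\<^sub>R e | t. True} = {S + t *\<^sub>R (- e) | t. True}"
proof (rule set_eqI, rule iffI)
  fix X assume "X \<in> {S + t *\<^sub>R e | t. True}"
  then obtain t where "X = S + t *\<^sub>R e" by blast
  hence "X = S + (- t) *\<^sub>R (- e)" by (metis scaleR_minus_left scaleR_minus_right minus_minus)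
  thus "X \<in> {S + t *\<^sub>R (- e) | t. True}" by blast
next
  fix X assume "X \<in> {S + t *\<^sub>R (- e) | t. True}"
  then obtain t where "X = S + t *\<^sub>R (- e)" by blast
  hence "X = S + (- t) *\<^sub>R e" by (metis scaleR_minus_left scaleR_minus_right minus_minus)
  thus "X \<in> {S + t *\<^sub>R e | t. True}" by blast
qed

lemma proj_eq:
  assumes L: "L = {S + t *\<^sub>R u | t. True}" and nu: "norm u = 1"
  shows "proj L X = S + inner (X - S) u *\<^sub>R u"
proof -
  have uu: "inner u u = 1" using nu by (simp add: power2_norm_eq_inner[symmetric])
  define k where "k = inner (X - S) u"
  have mem: "S + k *\<^sub>R u \<in> L" using L by blast
  have orth: "\<forall>Z\<in>L. inner (X - (S + k *\<^sub>R u)) (Z - (S + k *\<^sub>R u)) = 0"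
  proof
    fix Z assume "Z \<in> L"
    then obtain t where Z: "Z = S + t *\<^sub>R u" using L by blast
    have "Z - (S + k *\<^sub>R u) = (t - k) *\<^sub>R u" unfolding Z by (simp add: algebra_simps)
    moreover have "inner (X - (S + k *\<^sub>R u)) u = 0"
      unfolding k_def by (simp add: inner_diff_left inner_add_left uu)
    ultimately show "inner (X - (S + k *\<^sub>R u)) (Z - (S + k *\<^sub>R u)) = 0" by simp
  qed
  have uniq: "Y = S + k *\<^sub>R u" if H: "Y \<in> L \<and> (\<forall>Z\<in>L. inner (X - Y) (Z - Y) = 0)" for Y
  proof -
    obtain t where Y: "Y = S + t *\<^sub>R u" using H L by blast
    have "Y + u \<in> L" unfolding L Y by (rule CollectI, rule exI[of _ "t + 1"]) (simp add: algebra_simps)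
    hence "inner (X - Y) ((Y + u) - Y) = 0" using H by blast
    hence "inner (X - Y) u = 0" by simp
    hence "inner (X - S) u - t = 0" unfolding Y by (simp add: inner_diff_left inner_add_left uu)
    hence "t = k" unfolding k_def by simp
    thus ?thesis using Y by simp
  qed
  show ?thesis unfolding proj_def k_def[symmetric]
    by (rule the_equality) (use mem orth uniq in blast)+
qed

lemma unit_par:
  fixes e u :: "'a::real_inner"
  assumes "norm e = 1" "norm u = 1" "\<bar>inner e u\<bar> = 1"
  shows "e = inner e u *\<^sub>R u"
proof -
  have ee: "inner e e = 1" using assms(1) by (simp add: power2_norm_eq_inner[symmetric])
  have uu: "inner u u = 1" using assms(2) by (simp add: power2_norm_eq_inner[symmetric])
  have c2: "inner e u * inner e u = 1" using assms(3) abs_square_eq_1[of "inner e u"]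
    by (simp add: power2_eq_square)
  have "inner (e - inner e u *\<^sub>R u) (e - inner e u *\<^sub>R u)
      = inner e e - 2 * inner e u * inner e u + inner e u * inner e u * inner u u"
    by (simp add: inner_diff_left inner_diff_right inner_commute[of u e] algebra_simps)
  also have "\<dots> = 0" using ee uu c2 by simp
  finally show ?thesis by simp
qed

lemma nonpar_intersect:
  fixes e u a b :: point
  assumes ne: "norm e = 1" and nu: "norm u = 1" and c: "\<bar>inner e u\<bar> \<noteq> 1"
  shows "\<exists>S. {a + t *\<^sub>R e | t. True} \<inter> {b + t *\<^sub>R u | t. True} = {S}"
proof -
  define D where "D = e$1 * u$2 - e$2 * u$1"
  have ie: "inner e u = e$1 * u$1 + e$2 * u$2" by (simp add: inner_vec_def sum_2)
  have ee0: "inner e e = 1" using ne by (simp add: power2_norm_eq_inner[symmetric])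
  have uu0: "inner u u = 1" using nu by (simp add: power2_norm_eq_inner[symmetric])
  have ee: "e$1 * e$1 + e$2 * e$2 = 1"
    using ee0 by (simp add: inner_vec_def sum_2)
  have uu: "u$1 * u$1 + u$2 * u$2 = 1"
    using uu0 by (simp add: inner_vec_def sum_2)
  have lag: "inner e u * inner e u + D * D = 1"
  proof -
    have "inner e u * inner e u + D * D = (e$1 * e$1 + e$2 * e$2) * (u$1 * u$1 + u$2 * u$2)"
      unfolding ie D_def by algebra
    thus ?thesis using ee uu by simp
  qed
  have D0: "D \<noteq> 0"
  proof
    assume "D = 0"
    hence "inner e u * inner e u = 1" using lag by simp
    hence "\<bar>inner e u\<bar> = 1" using abs_square_eq_1[of "inner e u"] by (simp add: power2_eq_square)
    thus False using c by simp
  qed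
  define d where "d = b - a"
  define t where "t = (d$1 * u$2 - d$2 * u$1) / D"
  define s where "s = (d$1 * e$2 - d$2 * e$1) / D"
  have eq: "a + t *\<^sub>R e = b + s *\<^sub>R u"
  proof -
    have n1: "(d$1 * u$2 - d$2 * u$1) * e$1 - (d$1 * e$2 - d$2 * e$1) * u$1 = d$1 * D"
      unfolding D_def by algebra
    have n2: "(d$1 * u$2 - d$2 * u$1) * e$2 - (d$1 * e$2 - d$2 * e$1) * u$2 = d$2 * D"
      unfolding D_def by algebra
    have c1: "t * e$1 - s * u$1 = d$1"
    proof -
      have "t * e$1 - s * u$1 = ((d$1 * u$2 - d$2 * u$1) * e$1 - (d$1 * e$2 - d$2 * e$1) * u$1) / D"
        unfolding t_def s_def using D0 by (simp add: field_simps)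
      thus ?thesis unfolding n1 using D0 by simp
    qed
    have c2: "t * e$2 - s * u$2 = d$2"
    proof -
      have "t * e$2 - s * u$2 = ((d$1 * u$2 - d$2 * u$1) * e$2 - (d$1 * e$2 - d$2 * e$1) * u$2) / D"
        unfolding t_def s_def using D0 by (simp add: field_simps)
      thus ?thesis unfolding n2 using D0 by simp
    qed
    have "t *\<^sub>R e - s *\<^sub>R u = d"
      unfolding vec_eq_iff forall_2 using c1 c2 by (simp add: mult.commute)
    thus ?thesis unfolding d_def by (simp add: algebra_simps)
  qed
  have "{a + t *\<^sub>R e | t. True} \<inter> {b + t *\<^sub>R u | t. True} = {a + t *\<^sub>R e}"
  proof (rule set_eqI, rule iffI)
    fix X assume X: "X \<in> {a + t *\<^sub>R e | t. True} \<inter> {b + t *\<^sub>R u | t. True}"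
    then obtain t1 t2 where X1: "X = a + t1 *\<^sub>R e" and X2: "X = b + t2 *\<^sub>R u" by blast
    have "(t1 - t) *\<^sub>R e = (a + t1 *\<^sub>R e) - (a + t *\<^sub>R e)" by (simp add: scaleR_diff_left)
    also have "\<dots> = (b + t2 *\<^sub>R u) - (b + s *\<^sub>R u)" using X1 X2 eq by simp
    also have "\<dots> = (t2 - s) *\<^sub>R u" by (simp add: scaleR_diff_left)
    finally have dd: "(t1 - t) *\<^sub>R e = (t2 - s) *\<^sub>R u" .
    show "X \<in> {a + t *\<^sub>R e}"
    proof (cases "t1 = t")
      case True thus ?thesis using X1 by simp
    next
      case False
      hence "e = inverse (t1 - t) *\<^sub>R ((t1 - t) *\<^sub>R e)" by simp
      also have "\<dots> = ((t2 - s) / (t1 - t)) *\<^sub>R u" unfolding dd by (simp add: divide_inverse mult.commute)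
      finally have e': "e = ((t2 - s) / (t1 - t)) *\<^sub>R u" .
      have uu': "inner u u = 1" using nu by (simp add: power2_norm_eq_inner[symmetric])
      have "norm e = \<bar>(t2 - s) / (t1 - t)\<bar> * norm u" by (subst e', rule norm_scaleR)
      hence k1: "\<bar>(t2 - s) / (t1 - t)\<bar> = 1" using ne nu by (simp; auto)
      have k2: "inner e u = (t2 - s) / (t1 - t)" using e' uu' by simp
      have "\<bar>inner e u\<bar> = 1" unfolding k2 by (rule k1)
      with c show ?thesis by blast
    qed
  next
    fix X assume "X \<in> {a + t *\<^sub>R e}"
    hence "X = a + t *\<^sub>R e" by simp
    thus "X \<in> {a + t *\<^sub>R e | t. True} \<inter> {b + t *\<^sub>R u | t. True}" using eq by blast
  qed
  thus ?thesis by blast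
qed

lemma par_case:
  fixes e u0 a a' P A A' :: point
  assumes ne: "norm e = 1" and nu: "norm u0 = 1" and par: "e = c *\<^sub>R u0" and c: "\<bar>c\<bar> = 1"
    and P: "P = a + tP *\<^sub>R e" and A: "A = a + tA *\<^sub>R e" and A': "A' = a' + tA' *\<^sub>R u0"
    and P': "P' = a' + inner (P - a') u0 *\<^sub>R u0"
  shows "dist P P' + sqrt 3 * dist P' A' \<le> sqrt 3 * dist P A + 3 * dist A A'"
proof -
  have uu: "inner u0 u0 = 1" using nu by (simp add: power2_norm_eq_inner[symmetric])
  define w where "w = tA' - inner (P - a') u0"
  have Aw: "A' - P' = w *\<^sub>R u0" unfolding A' P' w_def by (simp add: scaleR_left_diff_distrib)
  have AP: "A - P = ((tA - tP) * c) *\<^sub>R u0" unfolding A P par by (simp add: scaleR_left_diff_distrib left_diff_distrib)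
  define n where "n = (P' - P) /\<^sub>R norm (P' - P)"
  have pu0: "inner (P' - P) u0 = 0" unfolding P' by (simp add: inner_diff_left inner_add_left uu)
  have nu0: "inner n u0 = 0" using pu0 unfolding n_def by simp
  have nn: "inner n n \<le> 1"
  proof (cases "P' = P")
    case True thus ?thesis unfolding n_def by simp
  next
    case False
    hence "norm n = 1" unfolding n_def by simp
    thus ?thesis by (simp add: power2_norm_eq_inner[symmetric])
  qed
  have nP: "inner n (P' - P) = norm (P' - P)"
  proof (cases "P' = P")
    case True thus ?thesis unfolding n_def by simp
  next
    case False
    hence "norm (P' - P) \<noteq> 0" by simp
    have "inner n (P' - P) = inner (P' - P) (P' - P) / norm (P' - P)"
      unfolding n_def by (simp add: divide_inverse mult.commute)
    also have "inner (P' - P) (P' - P) = norm (P' - P) * norm (P' - P)"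
      by (simp add: power2_norm_eq_inner[symmetric] power2_eq_square)
    finally show ?thesis using \<open>norm (P' - P) \<noteq> 0\<close> by simp
  qed
  define \<sigma> where "\<sigma> = (if w \<ge> 0 then 1 else - 1::real)"
  have s2: "\<sigma> * \<sigma> = 1" unfolding \<sigma>_def by simp
  define g where "g = \<sigma> *\<^sub>R u0 + sqrt 2 *\<^sub>R n"
  have gu: "inner g u0 = \<sigma>" unfolding g_def by (simp add: inner_add_left uu nu0)
  have gg: "inner g g = \<sigma> * \<sigma> + 2 * inner n n"
    unfolding g_def by (simp add: inner_add_left inner_add_right uu nu0 inner_commute[of u0 n])
  have ng: "norm g \<le> sqrt 3"
  proof -
    have "inner g g \<le> 3" using gg s2 nn by simp
    thus ?thesis by (simp add: norm_eq_sqrt_inner)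
  qed
  have g1: "\<bar>inner g u0\<bar> \<le> 1" unfolding gu \<sigma>_def by simp
  have g2a: "inner g (A' - P') = w * \<sigma>" unfolding Aw by (simp add: gu)
  have g2b: "w * \<sigma> = \<bar>w\<bar>" unfolding \<sigma>_def by simp
  have g2c: "dist A' P' = \<bar>w\<bar>" unfolding dist_norm Aw using nu by simp
  have g2: "inner g (A' - P') \<ge> dist A' P'" using g2a g2b g2c by simp
  have g3: "sqrt 3 * inner g (P' - P) \<ge> dist P P'"
  proof -
    have "inner g (P' - P) = \<sigma> * inner u0 (P' - P) + sqrt 2 * norm (P' - P)"
      unfolding g_def by (simp add: inner_add_left nP)
    also have "inner u0 (P' - P) = 0" using pu0 by (simp add: inner_commute)
    finally have "inner g (P' - P) = sqrt 2 * norm (P' - P)" by simp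
    hence "sqrt 3 * inner g (P' - P) = sqrt 6 * norm (P' - P)"
      by (simp add: real_sqrt_mult[symmetric])
    moreover have "sqrt 6 * norm (P' - P) \<ge> 1 * norm (P' - P)"
      by (rule mult_right_mono) simp_all
    ultimately show ?thesis by (simp add: dist_norm norm_minus_commute)
  qed
  show ?thesis by (rule cert[OF AP nu g1 ng g2 g3])
qed

lemma step_main:
  assumes L: "is_line L" and L': "is_line L'" and PL: "P \<in> L" and AL: "A \<in> L" and AL': "A' \<in> L'"
  shows "drift_step L L' P \<in> L' \<and>
    dist P (drift_step L L' P) + sqrt 3 * dist (drift_step L L' P) A' \<le> sqrt 3 * dist P A + 3 * dist A A'"
proof -
  obtain a e where ne: "norm e = 1" and Le: "L = {a + t *\<^sub>R e | t. True}" using line_unit[OF L] by blast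
  obtain a' u0 where nu0: "norm u0 = 1" and Lu: "L' = {a' + t *\<^sub>R u0 | t. True}" using line_unit[OF L'] by blast
  show ?thesis
  proof (cases "\<exists>S. L \<inter> L' = {S}")
    case False
    have c1: "\<bar>inner e u0\<bar> = 1"
    proof (rule ccontr)
      assume "\<bar>inner e u0\<bar> \<noteq> 1"
      from nonpar_intersect[OF ne nu0 this, of a a'] False Le Lu show False by blast
    qed
    have par: "e = inner e u0 *\<^sub>R u0" by (rule unit_par[OF ne nu0 c1])
    have ds: "drift_step L L' P = a' + inner (P - a') u0 *\<^sub>R u0"
      unfolding drift_step_def using False proj_eq[OF Lu nu0] by simp
    obtain tP where tP: "P = a + tP *\<^sub>R e" using PL Le by blast
    obtain tA where tA: "A = a + tA *\<^sub>R e" using AL Le by blast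
    obtain tA' where tA': "A' = a' + tA' *\<^sub>R u0" using AL' Lu by blast
    have mem: "drift_step L L' P \<in> L'"
    proof -
      have "a' + inner (P - a') u0 *\<^sub>R u0 \<in> L'" using Lu by blast
      thus ?thesis using ds by simp
    qed
    have "dist P (drift_step L L' P) + sqrt 3 * dist (drift_step L L' P) A' \<le> sqrt 3 * dist P A + 3 * dist A A'"
      by (rule par_case[OF ne nu0 par c1 tP tA tA' ds])
    thus ?thesis using mem by blast
  next
    case True
    then obtain S where S: "L \<inter> L' = {S}" by blast
    have theS: "(THE S. L \<inter> L' = {S}) = S" using S by auto
    have SL: "S \<in> L" and SL': "S \<in> L'" using S by auto
    have Le1: "L = {S + t *\<^sub>R e | t. True}" by (rule line_rebase[OF Le SL])
    have Lu1: "L' = {S + t *\<^sub>R u0 | t. True}" by (rule line_rebase[OF Lu SL'])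
    have cne: "\<bar>inner e u0\<bar> \<noteq> 1"
    proof
      assume c1: "\<bar>inner e u0\<bar> = 1"
      have par: "e = inner e u0 *\<^sub>R u0" by (rule unit_par[OF ne nu0 c1])
      have "S + e \<in> L" unfolding Le1 by (rule CollectI, rule exI[of _ 1]) simp
      moreover have "S + e \<in> L'" unfolding Lu1 by (rule CollectI, rule exI[of _ "inner e u0"]) (subst par, simp)
      ultimately have "S + e = S" using S by blast
      hence "e = 0" by simp
      thus False using ne by simp
    qed
    obtain \<rho> where rho: "P = S + \<rho> *\<^sub>R e" using PL Le1 by blast
    define e1 where "e1 = (if \<rho> \<ge> 0 then e else - e)"
    define r where "r = \<bar>\<rho>\<bar>"
    have ne1: "norm e1 = 1" unfolding e1_def using ne by simp
    have P1: "P = S + r *\<^sub>R e1" unfolding rho e1_def r_def by simp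
    have Le2: "L = {S + t *\<^sub>R e1 | t. True}" unfolding e1_def using Le1 line_neg by simp
    have r0: "r \<ge> 0" unfolding r_def by simp
    define u where "u = (if inner e1 u0 \<ge> 0 then u0 else - u0)"
    define c where "c = inner e1 u"
    have nu: "norm u = 1" unfolding u_def using nu0 by simp
    have Lu2: "L' = {S + t *\<^sub>R u | t. True}" unfolding u_def using Lu1 line_neg by simp
    have c0: "c \<ge> 0" unfolding c_def u_def by simp
    have cabs: "\<bar>c\<bar> = \<bar>inner e u0\<bar>" unfolding c_def u_def e1_def by simp
    have cle: "c \<le> 1"
    proof -
      have "\<bar>c\<bar> \<le> norm e1 * norm u" unfolding c_def by (rule Cauchy_Schwarz_ineq2)
      thus ?thesis using ne1 nu by simp
    qed
    have c1: "c < 1" using cle cabs cne c0 by auto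
    obtain a0 where a0: "A = S + a0 *\<^sub>R e1" using AL Le2 by blast
    obtain b0 where b0: "A' = S + b0 *\<^sub>R u" using AL' Lu2 by blast
    define Pb where "Pb = proj L' P"
    have Pb: "Pb = S + (r * c) *\<^sub>R u" unfolding Pb_def proj_eq[OF Lu2 nu] P1 c_def by simp
    define sn where "sn = sqrt (1 - c^2)"
    have cc: "c * c \<le> 1" using c0 c1 mult_left_le_one_le[of c c] by simp
    have sn2: "sn * sn = 1 - c * c" using cc unfolding sn_def by (simp add: power2_eq_square)
    have sn0: "sn \<ge> 0" using cc unfolding sn_def by (simp add: power2_eq_square)
    have ee: "inner e1 e1 = 1" using ne1 by (simp add: power2_norm_eq_inner[symmetric])
    have uu: "inner u u = 1" using nu by (simp add: power2_norm_eq_inner[symmetric])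
    have dSP: "dist S P = r" unfolding P1 dist_norm using ne1 r0 by simp
    have dSPb: "dist S Pb = r * c" unfolding Pb dist_norm using nu r0 c0 by simp
    have dPPb: "dist P Pb = r * sn"
    proof -
      have dPb: "P - Pb = r *\<^sub>R e1 - (r * c) *\<^sub>R u" unfolding P1 Pb by simp
      have "inner (P - Pb) (P - Pb) = inner (r *\<^sub>R e1 - (r * c) *\<^sub>R u) (r *\<^sub>R e1 - (r * c) *\<^sub>R u)"
        by (simp only: dPb)
      also have "\<dots> = r * r * inner e1 e1 - 2 * (r * r * c) * inner e1 u + (r * c) * (r * c) * inner u u"
        by (simp add: inner_diff_left inner_diff_right inner_commute[of u e1] algebra_simps)
      also have "\<dots> = r * r - r * r * c * c" using ee uu by (simp add: c_def[symmetric] algebra_simps)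
      also have "\<dots> = r * r * (sn * sn)" unfolding sn2 by (simp add: right_diff_distrib)
      also have "\<dots> = (r * sn)^2" by (simp add: power2_eq_square)
      finally have "inner (P - Pb) (P - Pb) = (r * sn)^2" .
      moreover have "r * sn \<ge> 0" using r0 sn0 by simp
      ultimately show ?thesis unfolding dist_norm norm_eq_sqrt_inner by simp
    qed
    define x where "x = r * (sn + c - 1) / sqrt 2"
    define p where "p = r * c - x"
    have xeq: "(dist P Pb + dist S Pb - dist S P) / sqrt 2 = x"
      unfolding dPPb dSPb dSP x_def by (simp add: algebra_simps)
    have ds: "drift_step L L' P = S + p *\<^sub>R u"
    proof (cases "Pb = S")
      case True
      hence rc: "r * c = 0" using Pb nu by auto
      have "p = 0"
      proof (cases "r = 0")
        case True thus ?thesis unfolding p_def x_def by simp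
      next
        case False
        hence "c = 0" using rc by simp
        thus ?thesis unfolding p_def x_def sn_def by simp
      qed
      thus ?thesis unfolding drift_step_def using \<open>\<exists>S. L \<inter> L' = {S}\<close> theS True
        by (simp add: Let_def Pb_def[symmetric])
    next
      case False
      hence rc: "r * c \<noteq> 0" using Pb by auto
      have "drift_step L L' P = S + ((r * c - x) / (r * c)) *\<^sub>R (Pb - S)"
        unfolding drift_step_def using \<open>\<exists>S. L \<inter> L' = {S}\<close> theS False xeq
        by (simp add: Let_def Pb_def[symmetric] dSPb[symmetric])
      also have "\<dots> = S + p *\<^sub>R u" unfolding Pb p_def using rc by simp
      finally show ?thesis .
    qed
    have mem: "drift_step L L' P \<in> L'"
    proof -
      have "S + p *\<^sub>R u \<in> L'" using Lu2 by blast
      thus ?thesis using ds by simp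
    qed
    have "dist P (drift_step L L' P) + sqrt 3 * dist (drift_step L L' P) A' \<le> sqrt 3 * dist P A + 3 * dist A A'"
      apply (simp only: ds)
      apply (simp only: P1 a0 b0)
      by (rule nonpar_main[OF ne1 nu c_def[symmetric] c0 c1 r0 sn_def x_def p_def])
    thus ?thesis using mem by blast
  qed
qed

lemma path_cost_Suc: "path_cost f (Suc t) = path_cost f t + dist (f t) (f (Suc t))"
  unfolding path_cost_def by (simp add: sum.cl_ivl_Suc)

lemma path_cost_0: "path_cost f 0 = 0"
  unfolding path_cost_def by simp

theorem mainTheorem1:
  fixes P0 :: point and L0 :: "point set" and X :: "nat \<Rightarrow> point set" and m :: nat
  assumes "is_line L0" and "P0 \<in> L0"
    and "\<forall>t\<in>{1..m}. is_line (X t)"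
  shows "path_cost (drift_pos L0 P0 X) m \<le> 3 * OPT P0 X m"
proof -
  define D where "D = drift_pos L0 P0 X"
  define PL where "PL = (\<lambda>t. if t = 0 then L0 else X t)"
  have lines: "is_line (PL t)" if "t \<le> m" for t
    using assms(1,3) that unfolding PL_def by auto
  have Dsuc: "D (Suc t) = drift_step (PL t) (X (Suc t)) (D t)" for t
    unfolding D_def PL_def by simp
  have claim: "D t \<in> PL t \<and> path_cost D t + sqrt 3 * dist (D t) (A t) \<le> 3 * path_cost A t"
    if A0: "A 0 = P0" and AX: "\<forall>t\<in>{1..m}. A t \<in> X t" and tm: "t \<le> m" for A t
    using tm
  proof (induction t)
    case 0
    show ?case using A0 assms(2) unfolding D_def PL_def by (simp add: path_cost_0)
  next
    case (Suc t)
    hence IH: "D t \<in> PL t" "path_cost D t + sqrt 3 * dist (D t) (A t) \<le> 3 * path_cost A t"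
      by auto
    have APL: "A t \<in> PL t" using A0 AX assms(2) Suc.prems unfolding PL_def by auto
    have AX': "A (Suc t) \<in> X (Suc t)" using AX Suc.prems by auto
    have LX: "is_line (X (Suc t))" using assms(3) Suc.prems by auto
    have st: "drift_step (PL t) (X (Suc t)) (D t) \<in> X (Suc t) \<and>
        dist (D t) (drift_step (PL t) (X (Suc t)) (D t)) + sqrt 3 * dist (drift_step (PL t) (X (Suc t)) (D t)) (A (Suc t))
        \<le> sqrt 3 * dist (D t) (A t) + 3 * dist (A t) (A (Suc t))"
      by (rule step_main[OF lines LX IH(1) APL AX']) (use Suc.prems in simp)
    have mem: "D (Suc t) \<in> PL (Suc t)" using st unfolding Dsuc PL_def by simp
    have ineq: "dist (D t) (D (Suc t)) + sqrt 3 * dist (D (Suc t)) (A (Suc t))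
        \<le> sqrt 3 * dist (D t) (A t) + 3 * dist (A t) (A (Suc t))"
      using st unfolding Dsuc by simp
    show ?case using mem ineq IH(2) unfolding path_cost_Suc by simp
  qed
  have bound: "path_cost D m / 3 \<le> c" if H: "c \<in> {path_cost A m | A. A 0 = P0 \<and> (\<forall>t\<in>{1..m}. A t \<in> X t)}" for c
  proof -
    obtain A where c: "c = path_cost A m" and A0: "A 0 = P0" and AX: "\<forall>t\<in>{1..m}. A t \<in> X t"
      using H by blast
    have "path_cost D m + sqrt 3 * dist (D m) (A m) \<le> 3 * path_cost A m"
      using claim[OF A0 AX] by simp
    moreover have "sqrt 3 * dist (D m) (A m) \<ge> 0" by simp
    ultimately have "path_cost D m \<le> 3 * path_cost A m" by linarith
    thus ?thesis unfolding c by simp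
  qed
  have ne: "{path_cost A m | A. A 0 = P0 \<and> (\<forall>t\<in>{1..m}. A t \<in> X t)} \<noteq> {}"
  proof -
    define A where "A = (\<lambda>t. if t = 0 then P0 else (SOME y. y \<in> X t))"
    have "\<forall>t\<in>{1..m}. A t \<in> X t"
    proof
      fix t assume t: "t \<in> {1..m}"
      then obtain a v where "X t = {a + s *\<^sub>R v | s. True}" using assms(3) unfolding is_line_def by blast
      hence "a \<in> X t" by (auto intro: exI[of _ 0])
      hence "(SOME y. y \<in> X t) \<in> X t" by (rule someI)
      thus "A t \<in> X t" unfolding A_def using t by simp
    qed
    moreover have "A 0 = P0" unfolding A_def by simp
    ultimately show ?thesis by blast
  qed
  have "path_cost D m / 3 \<le> OPT P0 X m"
    unfolding OPT_def by (rule cInf_greatest[OF ne bound])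
  thus ?thesis unfolding D_def by simp
qed

end
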